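(* In the discrete first-price auction (under either tie rule), let $\beta$ be a bidding function used by some player in an equilibrium. Then for any $v,v'\in X$ with $v'>v$, we have $\beta(v')\ge\beta(v)$.
   Context: Model. There are $n\ge 2$ risk-neutral bidders competing for one indivisible object. Normalise the grid so that values and bids lie in $X=\{0,1,2,\dots,x\}$ for some $x\in\mathbb N$. Each bidder $i$ privately learns a value $v_i\in X$; values are drawn independently across bidders and every element of $X$ has strictly positive probability. Each bidder submits a bid $b_i\in X$. A (pure) strategy of bidder $i$ is a bidding function $\beta_i:X\to X$. Tie rules: in the model without ties, bidder $i$ wins iff $b_i>b_j$ for all $j\neq i$ (if the highest bid is tied, nobody wins); in the model with ties, if $m$ bidders submit the highest bid, each of them wins with probability $1/m$. In the first-price auction, a bidder with value $v_i$ bidding $b_i$ gets expected payoff $(v_i-b_i)\Pr(i\text{ wins})$. An equilibrium is a profile of bidding functions such that each bidder's bidding function maximises their expected payoff given the others' bidding functions (a pure-strategy Bayes–Nash equilibrium) and such that no bidder uses a weakly dominated bidding function (a bidding function is weakly dominated if some other bidding function yields at least as high expected payoff against every profile of opponents' bidding functions, and strictly higher against some). *)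

theory Defs
  imports Complex_Main "HOL-Library.FuncSet"
begin

text \<open>Bidders are 0,...,n-1; values and bids lie in X = {0..x}.
  A bidding function is a map nat => nat, only its values on X matter.
  A profile b assigns to bidder j the bidding function b j.
  p j v is the probability that bidder j has value v.\<close>

datatype tie_rule = NoTies | Ties

definition valid_bf :: "nat \<Rightarrow> (nat \<Rightarrow> nat) \<Rightarrow> bool" where
  "valid_bf x \<beta> \<longleftrightarrow> (\<forall>v\<le>x. \<beta> v \<le> x)"

definition valid_profile :: "nat \<Rightarrow> nat \<Rightarrow> (nat \<Rightarrow> nat \<Rightarrow> nat) \<Rightarrow> bool" where
  "valid_profile n x b \<longleftrightarrow> (\<forall>j<n. valid_bf x (b j))"

definition valid_dists :: "nat \<Rightarrow> nat \<Rightarrow> (nat \<Rightarrow> nat \<Rightarrow> real) \<Rightarrow> bool" where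
  "valid_dists n x p \<longleftrightarrow> (\<forall>j<n. (\<forall>v\<le>x. p j v > 0) \<and> (\<Sum>v\<le>x. p j v) = 1)"

definition win_share :: "tie_rule \<Rightarrow> nat \<Rightarrow> nat \<Rightarrow> (nat \<Rightarrow> nat) \<Rightarrow> nat \<Rightarrow> real" where
  "win_share r n i bd c =
     (case r of
        NoTies \<Rightarrow> (if \<forall>j\<in>{0..<n}-{i}. bd j < c then 1 else 0)
      | Ties \<Rightarrow> (if \<forall>j\<in>{0..<n}-{i}. bd j \<le> c
                 then 1 / real (card {j\<in>{0..<n}-{i}. bd j = c} + 1) else 0))"

definition win_prob :: "tie_rule \<Rightarrow> nat \<Rightarrow> nat \<Rightarrow> (nat \<Rightarrow> nat \<Rightarrow> real)
    \<Rightarrow> (nat \<Rightarrow> nat \<Rightarrow> nat) \<Rightarrow> nat \<Rightarrow> nat \<Rightarrow> real" where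
  "win_prob r n x p b i c =
     (\<Sum>w\<in>PiE ({0..<n}-{i}) (\<lambda>_. {0..x}).
        (\<Prod>j\<in>{0..<n}-{i}. p j (w j)) * win_share r n i (\<lambda>j. b j (w j)) c)"

definition interim_payoff :: "tie_rule \<Rightarrow> nat \<Rightarrow> nat \<Rightarrow> (nat \<Rightarrow> nat \<Rightarrow> real)
    \<Rightarrow> (nat \<Rightarrow> nat \<Rightarrow> nat) \<Rightarrow> nat \<Rightarrow> nat \<Rightarrow> nat \<Rightarrow> real" where
  "interim_payoff r n x p b i v c = (real v - real c) * win_prob r n x p b i c"

text \<open>Ex-ante expected payoff of bidder i using bidding function beta against the
  opponents' bidding functions in profile b (the component b i is ignored).\<close>
definition exp_payoff :: "tie_rule \<Rightarrow> nat \<Rightarrow> nat \<Rightarrow> (nat \<Rightarrow> nat \<Rightarrow> real)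
    \<Rightarrow> (nat \<Rightarrow> nat \<Rightarrow> nat) \<Rightarrow> nat \<Rightarrow> (nat \<Rightarrow> nat) \<Rightarrow> real" where
  "exp_payoff r n x p b i \<beta> = (\<Sum>v\<le>x. p i v * interim_payoff r n x p b i v (\<beta> v))"

definition weakly_dominated :: "tie_rule \<Rightarrow> nat \<Rightarrow> nat \<Rightarrow> (nat \<Rightarrow> nat \<Rightarrow> real)
    \<Rightarrow> nat \<Rightarrow> (nat \<Rightarrow> nat) \<Rightarrow> bool" where
  "weakly_dominated r n x p i \<beta> \<longleftrightarrow>
     (\<exists>\<beta>'. valid_bf x \<beta>' \<and>
        (\<forall>b. valid_profile n x b \<longrightarrow> exp_payoff r n x p b i \<beta> \<le> exp_payoff r n x p b i \<beta>') \<and>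
        (\<exists>b. valid_profile n x b \<and> exp_payoff r n x p b i \<beta> < exp_payoff r n x p b i \<beta>'))"

definition equilibrium :: "tie_rule \<Rightarrow> nat \<Rightarrow> nat \<Rightarrow> (nat \<Rightarrow> nat \<Rightarrow> real)
    \<Rightarrow> (nat \<Rightarrow> nat \<Rightarrow> nat) \<Rightarrow> bool" where
  "equilibrium r n x p b \<longleftrightarrow> valid_profile n x b \<and>
     (\<forall>i<n. (\<forall>\<beta>'. valid_bf x \<beta>' \<longrightarrow> exp_payoff r n x p b i \<beta>' \<le> exp_payoff r n x p b i (b i))
            \<and> \<not> weakly_dominated r n x p i (b i))"

end

theory Submission
  imports Defs
begin

lemma wp_nonneg:
  assumes "valid_dists n x p"
  shows "0 \<le> win_prob r n x p b i c"
  unfolding win_prob_def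
proof (rule sum_nonneg)
  fix w assume w: "w \<in> PiE ({0..<n}-{i}) (\<lambda>_. {0..x})"
  have "0 \<le> (\<Prod>j\<in>{0..<n}-{i}. p j (w j))"
  proof (rule prod_nonneg)
    fix j assume j: "j \<in> {0..<n}-{i}"
    then have "w j \<le> x" using w by (auto simp: PiE_def Pi_def)
    then show "0 \<le> p j (w j)" using assms j unfolding valid_dists_def
      by (metis Diff_iff atLeastLessThan_iff less_le)
  qed
  moreover have "0 \<le> win_share r n i (\<lambda>j. b j (w j)) c"
    unfolding win_share_def by (cases r) auto
  ultimately show "0 \<le> (\<Prod>j\<in>{0..<n}-{i}. p j (w j)) * win_share r n i (\<lambda>j. b j (w j)) c"
    by simp
qed

lemma wp_pos:
  assumes "valid_dists n x p"
    and w: "w \<in> PiE ({0..<n}-{i}) (\<lambda>_. {0..x})"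
    and s: "win_share r n i (\<lambda>j. b j (w j)) c > 0"
  shows "0 < win_prob r n x p b i c"
  unfolding win_prob_def
proof (rule sum_pos2[OF _ w])
  show "finite (PiE ({0..<n}-{i}) (\<lambda>_. {0..x}))" by (simp add: finite_PiE)
  have pos: "0 < p j (w' j)" if "w' \<in> PiE ({0..<n}-{i}) (\<lambda>_. {0..x})" "j \<in> {0..<n}-{i}" for w' j
  proof -
    have "w' j \<le> x" using that by (auto simp: PiE_def Pi_def)
    then show ?thesis using assms(1) that(2) unfolding valid_dists_def by auto
  qed
  have "0 < (\<Prod>j\<in>{0..<n}-{i}. p j (w j))"
    by (rule prod_pos) (use pos[OF w] in auto)
  then show "0 < (\<Prod>j\<in>{0..<n}-{i}. p j (w j)) * win_share r n i (\<lambda>j. b j (w j)) c"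
    using s by simp
  fix w' assume w': "w' \<in> PiE ({0..<n}-{i}) (\<lambda>_. {0..x})"
  have "0 \<le> (\<Prod>j\<in>{0..<n}-{i}. p j (w' j))"
    by (rule prod_nonneg) (use pos[OF w'] in \<open>auto intro: less_imp_le\<close>)
  moreover have "0 \<le> win_share r n i (\<lambda>j. b j (w' j)) c"
    unfolding win_share_def by (cases r) auto
  ultimately show "0 \<le> (\<Prod>j\<in>{0..<n}-{i}. p j (w' j)) * win_share r n i (\<lambda>j. b j (w' j)) c"
    by simp
qed

definition w0 :: "nat \<Rightarrow> nat \<Rightarrow> nat \<Rightarrow> nat" where
  "w0 n i = (\<lambda>j. if j \<in> {0..<n}-{i} then 0 else undefined)"

lemma w0_in: "w0 n i \<in> PiE ({0..<n}-{i}) (\<lambda>_. {0..x})"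
  unfolding w0_def by (auto simp: PiE_def Pi_def extensional_def)

lemma share_pos:
  assumes "\<forall>j\<in>{0..<n}-{i}. bd j = 0" and "c \<ge> 1"
  shows "win_share r n i bd c > 0"
proof -
  have "{j\<in>{0..<n}-{i}. bd j = c} = {}" using assms by auto
  then show ?thesis using assms unfolding win_share_def by (cases r) auto
qed

lemma exp_payoff_upd:
  "exp_payoff r n x p b i (\<beta>(v := c)) - exp_payoff r n x p b i \<beta>
     = (if v \<le> x then p i v * (interim_payoff r n x p b i v c - interim_payoff r n x p b i v (\<beta> v)) else 0)"
proof -
  have "exp_payoff r n x p b i (\<beta>(v := c)) - exp_payoff r n x p b i \<beta>
      = (\<Sum>u\<le>x. p i u * interim_payoff r n x p b i u ((\<beta>(v := c)) u) - p i u * interim_payoff r n x p b i u (\<beta> u))"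
    unfolding exp_payoff_def by (simp add: sum_subtractf)
  also have "\<dots> = (\<Sum>u\<le>x. if u = v then p i v * (interim_payoff r n x p b i v c - interim_payoff r n x p b i v (\<beta> v)) else 0)"
    by (rule sum.cong) (auto simp: algebra_simps)
  also have "\<dots> = (if v \<le> x then p i v * (interim_payoff r n x p b i v c - interim_payoff r n x p b i v (\<beta> v)) else 0)"
    by (simp add: sum.delta)
  finally show ?thesis .
qed

lemma interim_opt:
  assumes "valid_dists n x p" "equilibrium r n x p b" "i < n" "v \<le> x" "c \<le> x"
  shows "interim_payoff r n x p b i v c \<le> interim_payoff r n x p b i v (b i v)"
proof -
  have vb: "valid_bf x (b i)" using assms(2,3) unfolding equilibrium_def valid_profile_def by auto
  have "valid_bf x ((b i)(v := c))" using vb assms(5) unfolding valid_bf_def by auto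
  then have "exp_payoff r n x p b i ((b i)(v := c)) \<le> exp_payoff r n x p b i (b i)"
    using assms(2,3) unfolding equilibrium_def by auto
  then have "p i v * (interim_payoff r n x p b i v c - interim_payoff r n x p b i v (b i v)) \<le> 0"
    using exp_payoff_upd[of r n x p b i "b i" v c] assms(4) by simp
  moreover have "p i v > 0" using assms(1,3,4) unfolding valid_dists_def by auto
  ultimately show ?thesis by (simp add: mult_le_0_iff)
qed

lemma no_overbid:
  assumes "valid_dists n x p" "equilibrium r n x p b" "j < n" "w \<le> x"
  shows "b j w \<le> w"
proof (rule ccontr)
  assume ov: "\<not> b j w \<le> w"
  have vb: "valid_bf x (b j)" using assms(2,3) unfolding equilibrium_def valid_profile_def by auto
  have v': "valid_bf x ((b j)(w := w))" using vb assms(4) unfolding valid_bf_def by auto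
  have weak: "exp_payoff r n x p b' j (b j) \<le> exp_payoff r n x p b' j ((b j)(w := w))" for b'
  proof -
    have "interim_payoff r n x p b' j w (b j w) \<le> 0"
      unfolding interim_payoff_def using ov wp_nonneg[OF assms(1)]
      by (simp add: mult_le_0_iff)
    moreover have "interim_payoff r n x p b' j w w = 0" unfolding interim_payoff_def by simp
    moreover have "p j w > 0" using assms(1,3,4) unfolding valid_dists_def by auto
    ultimately have A: "0 \<le> p j w * (interim_payoff r n x p b' j w w - interim_payoff r n x p b' j w (b j w))"
      by (simp add: mult_le_0_iff)
    show ?thesis using exp_payoff_upd[of r n x p b' j "b j" w w] assms(4) A
      by (simp split: if_splits)
  qed
  define b0 :: "nat \<Rightarrow> nat \<Rightarrow> nat" where "b0 = (\<lambda>_ _. 0)"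
  have vb0: "valid_profile n x b0" unfolding b0_def valid_profile_def valid_bf_def by auto
  have "win_share r n j (\<lambda>k. b0 k (w0 n j k)) (b j w) > 0"
    by (rule share_pos) (use ov in \<open>auto simp: b0_def\<close>)
  then have W: "0 < win_prob r n x p b0 j (b j w)" by (rule wp_pos[OF assms(1) w0_in])
  have "interim_payoff r n x p b0 j w (b j w) < 0"
    unfolding interim_payoff_def using ov W by (simp add: mult_neg_pos)
  moreover have "interim_payoff r n x p b0 j w w = 0" unfolding interim_payoff_def by simp
  moreover have "p j w > 0" using assms(1,3,4) unfolding valid_dists_def by auto
  ultimately have A: "0 < p j w * (interim_payoff r n x p b0 j w w - interim_payoff r n x p b0 j w (b j w))"
    by (simp add: mult_pos_neg)
  have "exp_payoff r n x p b0 j (b j) < exp_payoff r n x p b0 j ((b j)(w := w))"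
    using exp_payoff_upd[of r n x p b0 j "b j" w w] assms(4) A
    by (simp split: if_splits)
  then have "weakly_dominated r n x p j (b j)"
    unfolding weakly_dominated_def using v' weak vb0 by blast
  then show False using assms(2,3) unfolding equilibrium_def by auto
qed

theorem lemma3:
  fixes r :: tie_rule and n x :: nat and p :: "nat \<Rightarrow> nat \<Rightarrow> real"
    and b :: "nat \<Rightarrow> nat \<Rightarrow> nat" and i v v' :: nat
  assumes "n \<ge> 2"
    and "valid_dists n x p"
    and "equilibrium r n x p b"
    and "i < n"
    and "v < v'" and "v' \<le> x"
  shows "b i v \<le> b i v'"
proof (rule ccontr)
  assume "\<not> b i v \<le> b i v'"
  define c where "c = b i v"
  define c' where "c' = b i v'"
  have cc: "c' < c" using \<open>\<not> b i v \<le> b i v'\<close> unfolding c_def c'_def by simp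
  have vx: "v \<le> x" using assms(5,6) by simp
  have cv: "c \<le> v" unfolding c_def by (rule no_overbid[OF assms(2,3,4) vx])
  have c'x: "c' \<le> x" and cx: "c \<le> x" using cv cc vx by auto
  have zero: "\<forall>j\<in>{0..<n}-{i}. b j (w0 n i j) = 0"
  proof
    fix j assume j: "j \<in> {0..<n}-{i}"
    then have "w0 n i j = 0" unfolding w0_def by simp
    then show "b j (w0 n i j) = 0" using no_overbid[OF assms(2,3), of j 0] j by auto
  qed
  have W: "0 < win_prob r n x p b i c"
    by (rule wp_pos[OF assms(2) w0_in], rule share_pos) (use zero cc in auto)
  define W where "W = win_prob r n x p b i c"
  define W' where "W' = win_prob r n x p b i c'"
  have I1: "(real v - real c') * W' \<le> (real v - real c) * W"
    using interim_opt[OF assms(2,3,4) vx c'x] unfolding interim_payoff_def W_def W'_def c_def by simp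
  have I2: "(real v' - real c) * W \<le> (real v' - real c') * W'"
    using interim_opt[OF assms(2,3,4) assms(6) cx] unfolding interim_payoff_def W_def W'_def c'_def by simp
  have "(real v' - real v) * W \<le> (real v' - real v) * W'" using I1 I2 by (simp add: algebra_simps)
  then have WW: "W \<le> W'" using assms(5) by simp
  have pos: "real v - real c' > 0" using cv cc by simp
  have "(real v - real c') * W \<le> (real v - real c') * W'" using WW pos by simp
  moreover have "(real v - real c) * W < (real v - real c') * W" using W cc unfolding W_def by simp
  ultimately show False using I1 by linarith
qed

end
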